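(* Let $\varphi\colon\mathbb{D}\to\mathbb{D}$ be analytic and fix $a>0$. For $\delta,\kappa,\lambda,r>0$ (with $r$ small) set \[I(\delta,\kappa,\lambda,r)=\frac{1}{2\pi}\int_{\kappa ra-\lambda r}^{\kappa ra+\lambda r}\bigl|(C_\varphi f_{(1-r)e^{i\kappa r}})((1-\delta r)e^{it})\bigr|^2\,dt .\] (1) If $\tau_{\varphi,1}(\{1\})=a$, then $\lim_{r\to0^+}I(\delta,\kappa,\lambda,r)=\dfrac{a\,c(\delta,\lambda)}{1+\delta/a}$, where $c(\delta,\lambda)$ does not depend on $\kappa$, satisfies $0<c(\delta,\lambda)<1$, and $\lim_{\lambda\to\infty}c(\delta,\lambda)=1$ for every $\delta>0$. (2) If $\tau_{\varphi,1}(\{1\})\ne a$, then $\lim_{r\to0^+}I(\delta,\kappa,\lambda,r)=\varepsilon(\delta,\kappa,\lambda)$ exists and $\lim_{\kappa\to\infty}\varepsilon(\delta,\kappa,\lambda)=0$ for all $\delta,\lambda>0$.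
   Context: $\mathbb{D}$ is the open unit disc, $\mathbb{T}=\partial\mathbb{D}$, $P_z(\zeta)=(1-|z|^2)/|\zeta-z|^2$. For $w\in\mathbb{D}$, $f_w(z)=\sqrt{1-|w|^2}/(1-\overline{w}z)$ is the normalized reproducing kernel of $\mathcal{H}^2$, and $C_\varphi f=f\circ\varphi$. For $\alpha\in\mathbb{T}$, the Aleksandrov–Clark measure $\tau_{\varphi,\alpha}$ is the unique positive Borel measure on $\mathbb{T}$ with $\frac{1-|\varphi(z)|^2}{|\alpha-\varphi(z)|^2}=\int_{\mathbb{T}}P_z\,d\tau_{\varphi,\alpha}$ for all $z\in\mathbb{D}$. *)

theory Defs
  imports "HOL-Analysis.Analysis"
begin

definition poisson :: "complex \<Rightarrow> complex \<Rightarrow> real" where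
  "poisson z \<zeta> = (1 - (cmod z)^2) / (cmod (\<zeta> - z))^2"

definition nrk :: "complex \<Rightarrow> complex \<Rightarrow> complex" where
  "nrk w z = complex_of_real (sqrt (1 - (cmod w)^2)) / (1 - cnj w * z)"

definition comp_op :: "(complex \<Rightarrow> complex) \<Rightarrow> (complex \<Rightarrow> complex) \<Rightarrow> complex \<Rightarrow> complex" where
  "comp_op \<phi> f = f \<circ> \<phi>"

definition is_AC_measure :: "(complex \<Rightarrow> complex) \<Rightarrow> complex \<Rightarrow> complex measure \<Rightarrow> bool" where
  "is_AC_measure \<phi> \<alpha> \<mu> \<longleftrightarrow>
     sets \<mu> = sets (restrict_space borel (sphere 0 1)) \<and>
     (\<forall>z\<in>ball 0 1. ennreal ((1 - (cmod (\<phi> z))^2) / (cmod (\<alpha> - \<phi> z))^2)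
                     = (\<integral>\<^sup>+ \<zeta>. ennreal (poisson z \<zeta>) \<partial>\<mu>))"

definition I_int :: "(complex \<Rightarrow> complex) \<Rightarrow> real \<Rightarrow> real \<Rightarrow> real \<Rightarrow> real \<Rightarrow> real \<Rightarrow> real" where
  "I_int \<phi> a \<delta> \<kappa> l r =
     1 / (2 * pi) * integral {\<kappa> * r * a - l * r .. \<kappa> * r * a + l * r}
       (\<lambda>t. (cmod (comp_op \<phi> (nrk (complex_of_real (1 - r) * cis (\<kappa> * r)))
                       (complex_of_real (1 - \<delta> * r) * cis t)))^2)"

end

theory Submission
  imports Defs "HOL-Real_Asymp.Real_Asymp"
begin

lemma re_cayley: "Re ((1 + w) / (1 - w)) = (1 - (cmod w)^2) / (cmod (1 - w))^2"
proof -
  have "Re ((1 + w) / (1 - w)) = (Re (1+w) * Re (1-w) + Im (1+w) * Im (1-w)) / (cmod (1 - w))^2"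
    by (rule Re_divide')
  also have "Re (1+w) * Re (1-w) + Im (1+w) * Im (1-w) = 1 - (Re w ^2 + Im w ^2)"
    by (simp add: power2_eq_square algebra_simps)
  also have "Re w ^2 + Im w ^2 = (cmod w)^2" by (simp add: cmod_power2)
  finally show ?thesis .
qed

lemma re_herg: assumes "cmod \<zeta> = 1" shows "Re ((\<zeta> + z) / (\<zeta> - z)) = poisson z \<zeta>"
proof -
  have 1: "Re \<zeta> ^2 + Im \<zeta> ^2 = 1" using assms by (metis cmod_power2 one_power2)
  have "Re ((\<zeta> + z) / (\<zeta> - z)) = (Re (\<zeta>+z) * Re (\<zeta>-z) + Im (\<zeta>+z) * Im (\<zeta>-z)) / (cmod (\<zeta> - z))^2"
    by (rule Re_divide')
  also have "Re (\<zeta>+z) * Re (\<zeta>-z) + Im (\<zeta>+z) * Im (\<zeta>-z) = (Re \<zeta> ^2 + Im \<zeta> ^2) - (Re z ^2 + Im z ^2)"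
    by (simp add: power2_eq_square algebra_simps)
  also have "Re z ^2 + Im z ^2 = (cmod z)^2" by (simp add: cmod_power2)
  finally show ?thesis unfolding poisson_def 1 .
qed
lemma kid: fixes \<zeta> y z :: complex assumes "\<zeta> \<noteq> y" "\<zeta> \<noteq> z" "y \<noteq> z"
  shows "((\<zeta> + y) / (\<zeta> - y) - (\<zeta> + z) / (\<zeta> - z)) / (y - z) - 2 * \<zeta> / (\<zeta> - z)^2
        = 2 * \<zeta> * (y - z) / ((\<zeta> - y) * (\<zeta> - z)^2)"
proof -
  have a: "\<zeta> - y \<noteq> 0" "\<zeta> - z \<noteq> 0" "y - z \<noteq> 0" using assms by auto
  have "(\<zeta> + y) / (\<zeta> - y) - (\<zeta> + z) / (\<zeta> - z) = ((\<zeta> + y) * (\<zeta> - z) - (\<zeta> + z) * (\<zeta> - y)) / ((\<zeta> - y) * (\<zeta> - z))"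
    using a by (simp add: diff_frac_eq)
  also have "(\<zeta> + y) * (\<zeta> - z) - (\<zeta> + z) * (\<zeta> - y) = 2 * \<zeta> * (y - z)" by algebra
  finally have 1: "((\<zeta> + y) / (\<zeta> - y) - (\<zeta> + z) / (\<zeta> - z)) / (y - z) = 2 * \<zeta> / ((\<zeta> - y) * (\<zeta> - z))"
    using a by simp
  have g: "X / (A * B) - X / B^2 = X * (B - A) / (A * B^2)" if "A \<noteq> 0" "B \<noteq> 0" for X A B :: complex
    using that by (simp add: field_simps power2_eq_square)
  have "2 * \<zeta> / ((\<zeta> - y) * (\<zeta> - z)) - 2 * \<zeta> / (\<zeta> - z)^2 = 2 * \<zeta> * ((\<zeta> - z) - (\<zeta> - y)) / ((\<zeta> - y) * (\<zeta> - z)^2)"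
    using g a by blast
  also have "2 * \<zeta> * ((\<zeta> - z) - (\<zeta> - y)) = 2 * \<zeta> * (y - z)" by algebra
  finally show ?thesis using 1 by simp
qed
lemma re_zero_deriv:
  fixes f :: "complex \<Rightarrow> complex"
  assumes df: "(f has_field_derivative f') (at z)" and S: "open S" "z \<in> S" and re: "\<And>w. w \<in> S \<Longrightarrow> Re (f w) = 0"
  shows "f' = 0"
proof -
  have "(f has_derivative (\<lambda>h. f' * h)) (at z)" using df by (simp add: has_field_derivative_def)
  then have d1: "((\<lambda>w. Re (f w)) has_derivative (\<lambda>h. Re (f' * h))) (at z)"
    by (rule bounded_linear.has_derivative[OF bounded_linear_Re])
  have "((\<lambda>w. 0::real) has_derivative (\<lambda>h. 0)) (at z)" by simp
  then have d2: "((\<lambda>w. Re (f w)) has_derivative (\<lambda>h. 0)) (at z)"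
    by (rule has_derivative_transform_within_open[OF _ S]) (simp add: re)
  have e: "(\<lambda>h. Re (f' * h)) = (\<lambda>h. 0)" by (rule has_derivative_unique[OF d1 d2])
  have "Re (f' * 1) = 0" "Re (f' * \<i>) = 0" using fun_cong[OF e, of 1] fun_cong[OF e, of \<i>] by auto
  then show ?thesis by (simp add: complex_eq_iff)
qed
lemma dq_right:
  fixes W :: "complex \<Rightarrow> complex"
  assumes "(W has_field_derivative W') (at 0)"
  shows "((\<lambda>r::real. (W (of_real r) - W 0) / of_real r) \<longlongrightarrow> W') (at_right 0)"
proof -
  have 1: "((\<lambda>\<rho>. (W \<rho> - W 0) / (\<rho> - 0)) \<longlongrightarrow> W') (at 0)"
    using assms by (simp add: has_field_derivative_iff)
  have 2: "filterlim (\<lambda>r::real. complex_of_real r) (at 0) (at_right 0)"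
    unfolding filterlim_at
  proof
    show "\<forall>\<^sub>F x in at_right 0. complex_of_real x \<in> UNIV \<and> complex_of_real x \<noteq> 0"
      using eventually_at_right_less[of "0::real"] by (auto elim: eventually_mono)
    have "((\<lambda>r::real. complex_of_real r) \<longlongrightarrow> complex_of_real 0) (at_right 0)"
      by (intro tendsto_intros)
    then show "((\<lambda>r::real. complex_of_real r) \<longlongrightarrow> 0) (at_right 0)" by simp
  qed
  show ?thesis using filterlim_compose[OF 1 2] by simp
qed

lemma cis_bound: "cmod (1 - cis \<theta>) \<le> \<bar>\<theta>\<bar>"
proof -
  have "(cmod (1 - cis \<theta>))^2 = (1 - cos \<theta>)^2 + (sin \<theta>)^2"
    by (simp add: cmod_power2)
  also have "\<dots> = 2 - 2 * cos \<theta>" using sin_cos_squared_add[of \<theta>] by (simp add: power2_eq_square algebra_simps)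
  also have "cos \<theta> = 1 - 2 * (sin (\<theta>/2))^2" using cos_double_sin[of "\<theta>/2"] by simp
  also have "2 - 2 * (1 - 2 * (sin (\<theta>/2))^2) = 4 * (sin (\<theta>/2))^2" by simp
  also have "\<dots> \<le> 4 * (\<theta>/2)^2"
    using abs_sin_x_le_abs_x[of "\<theta>/2"] by (metis power2_abs abs_ge_zero power_mono mult_left_mono zero_le_numeral)
  also have "\<dots> = \<bar>\<theta>\<bar>^2" by (simp add: power2_eq_square)
  finally show ?thesis using abs_ge_zero power2_le_imp_le by blast
qed

lemma change_var:
  fixes f :: "real \<Rightarrow> real"
  assumes "continuous_on {c - l * r .. c + l * r} f" "r > 0" "l > 0"
  shows "integral {c - l * r .. c + l * r} f = r * integral {-l..l} (\<lambda>s. f (r * s + c))"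
proof -
  have "(f has_integral integral {c - l * r .. c + l * r} f) (cbox (c - l * r) (c + l * r))"
    using integrable_continuous_real[OF assms(1)] by (simp add: cbox_interval has_integral_integral)
  from has_integral_affinity'[OF this assms(2), of c]
  have "((\<lambda>s. f (r * s + c)) has_integral integral {c - l * r .. c + l * r} f / r) {-l..l}"
    using assms by (simp add: cbox_interval divide_simps)
  then have "integral {-l..l} (\<lambda>s. f (r * s + c)) = integral {c - l * r .. c + l * r} f / r"
    by (rule integral_unique)
  then show ?thesis using assms by simp
qed
lemma arctan_int:
  fixes A c K l :: real
  assumes A: "A > 0" and l: "l > 0"
  shows "integral {-l..l} (\<lambda>s. K / (A^2 + (c - s)^2)) = K / A * (arctan ((l - c) / A) - arctan ((-l - c) / A))"
proof -
  have "((\<lambda>s. K / (A^2 + (c - s)^2)) has_integral (K / A * arctan ((l - c) / A) - K / A * arctan ((-l - c) / A))) {-l..l}"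
  proof (rule fundamental_theorem_of_calculus)
    show "-l \<le> l" using l by simp
    fix x assume "x \<in> {-l..l}"
    have "((\<lambda>s. K / A * arctan ((s - c) / A)) has_real_derivative (K / A * (inverse (1 + ((x - c) / A)^2) * (1 / A)))) (at x)"
      using A by (auto intro!: derivative_eq_intros)
    moreover have "K / A * (inverse (1 + ((x - c) / A)^2) * (1 / A)) = K / (A^2 + (c - x)^2)"
      using A by (simp add: field_simps power2_eq_square)
    ultimately have "((\<lambda>s. K / A * arctan ((s - c) / A)) has_real_derivative K / (A^2 + (c - x)^2)) (at x)" by simp
    then show "((\<lambda>s. K / A * arctan ((s - c) / A)) has_vector_derivative K / (A^2 + (c - x)^2)) (at x within {-l..l})"
      by (simp add: has_real_derivative_iff_has_vector_derivative has_vector_derivative_at_within)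
  qed
  then show ?thesis by (simp add: integral_unique right_diff_distrib)
qed
lemma alg:
  fixes W P z :: complex and r :: real
  assumes P: "P \<noteq> 1" and z: "z \<noteq> 1" and r: "r \<noteq> 0" and d: "1 - W * P \<noteq> 0"
  shows "of_real r / (1 - W * P) = ((1 - z) * ((1 + P) / (1 - P)) + 1 - z) /
          ((1 - W) / of_real r * ((1 - z) * ((1 + P) / (1 - P)) + 1 - z) + 2 * W * ((1 - z) / of_real r))"
proof -
  have p: "1 - P \<noteq> 0" using P by simp
  have zz: "1 - z \<noteq> 0" using z by simp
  have rr: "complex_of_real r \<noteq> 0" using r by simp
  have e: "(1 - z) * ((1 + P) / (1 - P)) + 1 - z = 2 * (1 - z) / (1 - P)"
    using p by (simp add: field_simps)
  have e2: "(1 - W) / of_real r * (2 * (1 - z) / (1 - P)) + 2 * W * ((1 - z) / of_real r)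
       = (1 - W * P) * (2 * (1 - z) / (1 - P)) / of_real r"
    using p rr by (simp add: field_simps)
  have g: "R / D = Q / (D * Q / R)" if "Q \<noteq> 0" "D \<noteq> 0" "R \<noteq> 0" for Q D R :: complex
    using that by simp
  have q: "2 * (1 - z) / (1 - P) \<noteq> 0" using p zz by simp
  show ?thesis unfolding e e2 by (rule g[OF q d rr])
qed

lemma arct_neg: assumes "A > 0" "e < 0" shows "((\<lambda>k::real. arctan ((l - k * e) / A) - arctan ((- l - k * e) / A)) \<longlongrightarrow> 0) at_top"
proof -
  have lin: "filterlim (\<lambda>k::real. c + (- e / A) * k) at_top at_top" for c
  proof -
    have "filterlim (\<lambda>k::real. (- e / A) * k) at_top at_top"
      by (rule filterlim_tendsto_pos_mult_at_top[OF tendsto_const _ filterlim_ident]) (use assms in \<open>simp add: divide_neg_pos\<close>)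
    then show ?thesis by (rule filterlim_tendsto_add_at_top[OF tendsto_const])
  qed
  have e1: "(\<lambda>k::real. (l - k * e) / A) = (\<lambda>k. l / A + (- e / A) * k)" using assms by (auto simp: field_simps)
  have e2: "(\<lambda>k::real. (- l - k * e) / A) = (\<lambda>k. (- l) / A + (- e / A) * k)" using assms by (auto simp: field_simps)
  have f1: "filterlim (\<lambda>k::real. (l - k * e) / A) at_top at_top" unfolding e1 by (rule lin)
  have f2: "filterlim (\<lambda>k::real. (- l - k * e) / A) at_top at_top" unfolding e2 by (rule lin)
  have "((\<lambda>k::real. arctan ((l - k * e) / A) - arctan ((- l - k * e) / A)) \<longlongrightarrow> pi/2 - pi/2) at_top"
    by (intro tendsto_diff filterlim_compose[OF tendsto_arctan_at_top f1] filterlim_compose[OF tendsto_arctan_at_top f2])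
  then show ?thesis by simp
qed
lemma arct_lim: assumes "A > 0" "e \<noteq> 0"
  shows "((\<lambda>k::real. arctan ((l - k * e) / A) - arctan ((- l - k * e) / A)) \<longlongrightarrow> 0) at_top"
proof (cases "e < 0")
  case True then show ?thesis using arct_neg assms by blast
next
  case False
  then have "-e < 0" using assms by simp
  from arct_neg[OF assms(1) this, of l]
  have "((\<lambda>k::real. arctan ((l - k * (-e)) / A) - arctan ((- l - k * (-e)) / A)) \<longlongrightarrow> 0) at_top" .
  moreover have "arctan ((l - k * (-e)) / A) - arctan ((- l - k * (-e)) / A) = arctan ((l - k * e) / A) - arctan ((- l - k * e) / A)" for k
  proof -
    have "(l - k * (-e)) / A = - ((- l - k * e) / A)" "(- l - k * (-e)) / A = - ((l - k * e) / A)"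
      using assms(1) by (simp_all add: field_simps)
    then show ?thesis by (simp add: arctan_minus)
  qed
  ultimately show ?thesis by simp
qed
lemma c_lim: "A > 0 \<Longrightarrow> ((\<lambda>l::real. 2 / pi * arctan (l / A)) \<longlongrightarrow> 1) at_top"
  by real_asymp

context
  fixes \<phi> :: "complex \<Rightarrow> complex" and \<mu> :: "complex measure"
  assumes tau: "is_AC_measure \<phi> 1 \<mu>"
    and maps: "\<phi> ` ball 0 1 \<subseteq> ball 0 1"
    and hol: "\<phi> holomorphic_on ball 0 1"
begin
lemma phi_in: assumes "(z::complex) \<in> ball 0 1" shows "cmod (\<phi> z) < 1"
proof -
  have "\<phi> z \<in> ball 0 1" using maps assms by blast
  then show ?thesis by simp
qed

lemma sets_mu: "sets \<mu> = sets (restrict_space borel (sphere 0 1))"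
  using tau unfolding is_AC_measure_def by auto
lemma space_mu: "space \<mu> = sphere 0 1"
  using sets_eq_imp_space_eq[OF sets_mu] by simp
lemma meas_mu: "continuous_on (sphere 0 1) f \<Longrightarrow> f \<in> borel_measurable \<mu>"
  using borel_measurable_continuous_on_restrict[of "sphere 0 1" f] 
  by (subst measurable_cong_sets[OF sets_mu refl])
lemma AC_eq: "z \<in> ball 0 1 \<Longrightarrow> ennreal ((1 - (cmod (\<phi> z))^2) / (cmod (1 - \<phi> z))^2)
                     = (\<integral>\<^sup>+ \<zeta>. ennreal (poisson z \<zeta>) \<partial>\<mu>)"
  using tau unfolding is_AC_measure_def by auto
lemma finite_mu: "finite_measure \<mu>"
proof (rule finite_measureI)
  have "(\<integral>\<^sup>+ \<zeta>. ennreal (poisson 0 \<zeta>) \<partial>\<mu>) = (\<integral>\<^sup>+ \<zeta>. 1 \<partial>\<mu>)"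
    by (rule nn_integral_cong) (simp add: poisson_def space_mu)
  also have "\<dots> = emeasure \<mu> (space \<mu>)" by simp
  finally have "emeasure \<mu> (space \<mu>) = ennreal ((1 - (cmod (\<phi> 0))^2) / (cmod (1 - \<phi> 0))^2)" 
    using AC_eq[of 0] by simp
  then show "emeasure \<mu> (space \<mu>) \<noteq> \<infinity>" by simp
qed

lemma int_bound:
  fixes f :: "complex \<Rightarrow> 'b::{banach,second_countable_topology}"
  assumes "continuous_on (sphere 0 1) f" "\<And>\<zeta>. \<zeta> \<in> sphere 0 1 \<Longrightarrow> norm (f \<zeta>) \<le> B"
  shows "integrable \<mu> f" "norm (integral\<^sup>L \<mu> f) \<le> B * measure \<mu> (space \<mu>)"
proof -
  interpret finite_measure \<mu> by (rule finite_mu)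
  show i: "integrable \<mu> f"
    by (rule integrable_const_bound[where B=B]) (use assms meas_mu space_mu in auto)
  have "norm (integral\<^sup>L \<mu> f) \<le> integral\<^sup>L \<mu> (\<lambda>x. norm (f x))" by (rule integral_norm_bound)
  also have "\<dots> \<le> integral\<^sup>L \<mu> (\<lambda>x. B)"
    by (rule integral_mono) (use i assms space_mu in auto)
  also have "\<dots> = B * measure \<mu> (space \<mu>)" by simp
  finally show "norm (integral\<^sup>L \<mu> f) \<le> B * measure \<mu> (space \<mu>)" .
qed

definition G :: "complex \<Rightarrow> complex" where
  "G z = integral\<^sup>L \<mu> (\<lambda>\<zeta>. (\<zeta> + z) / (\<zeta> - z))"

lemma dist_sph: "cmod (\<zeta>::complex) = 1 \<Longrightarrow> 1 - cmod z \<le> cmod (\<zeta> - z)"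
  by (metis norm_triangle_ineq2)

lemma kern_cont: assumes "(z::complex) \<in> ball 0 1" shows "continuous_on (sphere 0 1) (\<lambda>\<zeta>. (\<zeta> + z) / (\<zeta> - z))"
  apply (rule continuous_on_divide)
  apply (intro continuous_intros)
  apply (intro continuous_intros)
  using assms apply auto
  done

lemma kern_int: assumes "(z::complex) \<in> ball 0 1" shows "integrable \<mu> (\<lambda>\<zeta>. (\<zeta> + z) / (\<zeta> - z))"
proof (rule int_bound(1)[OF kern_cont[OF assms]])
  fix \<zeta> :: complex assume "\<zeta> \<in> sphere 0 1"
  then have 1: "cmod \<zeta> = 1" by simp
  have d: "1 - cmod z > 0" using assms by simp
  have "cmod ((\<zeta> + z) / (\<zeta> - z)) = cmod (\<zeta> + z) / cmod (\<zeta> - z)" by (simp add: norm_divide)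
  also have "\<dots> \<le> 2 / (1 - cmod z)"
    apply (rule frac_le)
    using norm_triangle_ineq[of \<zeta> z] 1 assms dist_sph[OF 1, of z] d by auto
  finally show "cmod ((\<zeta> + z) / (\<zeta> - z)) \<le> 2 / (1 - cmod z)" .
qed

lemma ReG: assumes "(z::complex) \<in> ball 0 1" shows "Re (G z) = (1 - (cmod (\<phi> z))^2) / (cmod (1 - \<phi> z))^2"
proof -
  have "Re (G z) = integral\<^sup>L \<mu> (\<lambda>\<zeta>. Re ((\<zeta> + z) / (\<zeta> - z)))"
    unfolding G_def by (rule integral_bounded_linear[OF bounded_linear_Re kern_int[OF assms], symmetric])
  also have "\<dots> = integral\<^sup>L \<mu> (poisson z)"
    by (rule Bochner_Integration.integral_cong) (auto simp: space_mu re_herg)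
  finally have e: "Re (G z) = integral\<^sup>L \<mu> (poisson z)" .
  have ip: "integrable \<mu> (poisson z)"
  proof -
    have "integrable \<mu> (\<lambda>\<zeta>. Re ((\<zeta> + z) / (\<zeta> - z))) = integrable \<mu> (poisson z)"
      by (rule Bochner_Integration.integrable_cong) (auto simp: space_mu re_herg)
    then show ?thesis using integrable_Re[OF kern_int[OF assms]] by simp
  qed
  have "ennreal (integral\<^sup>L \<mu> (poisson z)) = (\<integral>\<^sup>+ \<zeta>. ennreal (poisson z \<zeta>) \<partial>\<mu>)"
  proof (rule nn_integral_eq_integral[OF ip, symmetric])
    have "(cmod z)^2 \<le> 1" using assms by (simp add: power_le_one)
    then show "AE x in \<mu>. 0 \<le> poisson z x" by (auto simp: poisson_def)
  qed
  also have "\<dots> = ennreal ((1 - (cmod (\<phi> z))^2) / (cmod (1 - \<phi> z))^2)" using AC_eq[OF assms] by simp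
  finally have "ennreal (integral\<^sup>L \<mu> (poisson z)) = ennreal ((1 - (cmod (\<phi> z))^2) / (cmod (1 - \<phi> z))^2)" .
  moreover have "integral\<^sup>L \<mu> (poisson z) \<ge> 0"
  proof (rule Bochner_Integration.integral_nonneg)
    have "(cmod z)^2 \<le> 1" using assms by (simp add: power_le_one)
    then show "\<And>x. x \<in> space \<mu> \<Longrightarrow> 0 \<le> poisson z x" by (auto simp: poisson_def)
  qed
  moreover have "(1 - (cmod (\<phi> z))^2) / (cmod (1 - \<phi> z))^2 \<ge> 0"
  proof -
    have "cmod (\<phi> z) < 1" using phi_in assms by auto
    then have "(cmod (\<phi> z))^2 \<le> 1" by (simp add: power_le_one)
    then show ?thesis by simp
  qed
  ultimately show ?thesis unfolding e using ennreal_inj by blast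
qed

lemma G_deriv:
  assumes z: "(z::complex) \<in> ball 0 1"
  shows "(G has_field_derivative integral\<^sup>L \<mu> (\<lambda>\<zeta>. 2 * \<zeta> / (\<zeta> - z)^2)) (at z)"
proof -
  define d where "d = 1 - cmod z"
  have d: "d > 0" using z by (simp add: d_def)
  define D where "D = integral\<^sup>L \<mu> (\<lambda>\<zeta>. 2 * \<zeta> / (\<zeta> - z)^2)"
  define C where "C = 4 / d^3 * measure \<mu> (space \<mu>)"
  have Dc: "continuous_on (sphere 0 1) (\<lambda>\<zeta>. 2 * \<zeta> / (\<zeta> - z)^2)"
    apply (rule continuous_on_divide)
      apply (intro continuous_intros)
     apply (intro continuous_intros)
    using z by auto
  have Di: "integrable \<mu> (\<lambda>\<zeta>. 2 * \<zeta> / (\<zeta> - z)^2)"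
  proof (rule int_bound(1)[OF Dc])
    fix \<zeta> :: complex assume "\<zeta> \<in> sphere 0 1"
    then have 1: "cmod \<zeta> = 1" by simp
    have "cmod (\<zeta> - z) \<ge> d" using dist_sph[OF 1, of z] by (simp add: d_def)
    then have "(cmod (\<zeta> - z))^2 \<ge> d^2" using d by (simp add: power_mono)
    then show "cmod (2 * \<zeta> / (\<zeta> - z)^2) \<le> 2 / d^2"
      using 1 d by (simp add: norm_divide norm_mult norm_power frac_le)
  qed
  have ev: "eventually (\<lambda>y. norm ((G y - G z) / (y - z) - D) \<le> C * cmod (y - z)) (at z)"
    unfolding eventually_at
  proof (intro exI[of _ "d/2"] conjI ballI impI)
    show "d/2 > 0" using d by simp
    fix y :: complex assume "y \<in> UNIV" "y \<noteq> z \<and> dist y z < d / 2"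
    then have yz: "y \<noteq> z" and dyz: "cmod (y - z) < d/2" by (auto simp: dist_norm)
    have y: "y \<in> ball 0 1"
      using dyz norm_triangle_ineq2[of y z] by (simp add: d_def) (smt (verit) norm_minus_commute norm_triangle_ineq2)
    have kc: "continuous_on (sphere 0 1) (\<lambda>\<zeta>. 2 * \<zeta> * (y - z) / ((\<zeta> - y) * (\<zeta> - z)^2))"
      apply (rule continuous_on_divide)
        apply (intro continuous_intros)
       apply (intro continuous_intros)
      using z y by auto
    have eq: "(G y - G z) / (y - z) - D = integral\<^sup>L \<mu> (\<lambda>\<zeta>. 2 * \<zeta> * (y - z) / ((\<zeta> - y) * (\<zeta> - z)^2))"
    proof -
      have "(G y - G z) / (y - z) - D = integral\<^sup>L \<mu> (\<lambda>\<zeta>. ((\<zeta> + y) / (\<zeta> - y) - (\<zeta> + z) / (\<zeta> - z)) / (y - z) - 2 * \<zeta> / (\<zeta> - z)^2)"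
      proof -
        have i1: "integrable \<mu> (\<lambda>\<zeta>. (\<zeta> + y) / (\<zeta> - y) - (\<zeta> + z) / (\<zeta> - z))"
          using kern_int[OF y] kern_int[OF z] by (rule Bochner_Integration.integrable_diff)
        have i2: "integrable \<mu> (\<lambda>\<zeta>. ((\<zeta> + y) / (\<zeta> - y) - (\<zeta> + z) / (\<zeta> - z)) / (y - z))"
          using i1 by (rule integrable_divide_zero)
        have "integral\<^sup>L \<mu> (\<lambda>\<zeta>. ((\<zeta> + y) / (\<zeta> - y) - (\<zeta> + z) / (\<zeta> - z)) / (y - z) - 2 * \<zeta> / (\<zeta> - z)^2)
          = integral\<^sup>L \<mu> (\<lambda>\<zeta>. ((\<zeta> + y) / (\<zeta> - y) - (\<zeta> + z) / (\<zeta> - z)) / (y - z)) - integral\<^sup>L \<mu> (\<lambda>\<zeta>. 2 * \<zeta> / (\<zeta> - z)^2)"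
          by (rule Bochner_Integration.integral_diff[OF i2 Di])
        also have "integral\<^sup>L \<mu> (\<lambda>\<zeta>. ((\<zeta> + y) / (\<zeta> - y) - (\<zeta> + z) / (\<zeta> - z)) / (y - z))
           = integral\<^sup>L \<mu> (\<lambda>\<zeta>. ((\<zeta> + y) / (\<zeta> - y) - (\<zeta> + z) / (\<zeta> - z))) / (y - z)"
          by (rule integral_divide_zero)
        also have "integral\<^sup>L \<mu> (\<lambda>\<zeta>. ((\<zeta> + y) / (\<zeta> - y) - (\<zeta> + z) / (\<zeta> - z)))
           = G y - G z" unfolding G_def by (rule Bochner_Integration.integral_diff[OF kern_int[OF y] kern_int[OF z]])
        finally show ?thesis unfolding D_def by simp
      qed
      also have "\<dots> = integral\<^sup>L \<mu> (\<lambda>\<zeta>. 2 * \<zeta> * (y - z) / ((\<zeta> - y) * (\<zeta> - z)^2))"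
      proof (rule Bochner_Integration.integral_cong[OF refl])
        fix \<zeta> assume "\<zeta> \<in> space \<mu>"
        then have "cmod \<zeta> = 1" by (simp add: space_mu)
        then have "\<zeta> \<noteq> y" "\<zeta> \<noteq> z" using y z by auto
        then show "((\<zeta> + y) / (\<zeta> - y) - (\<zeta> + z) / (\<zeta> - z)) / (y - z) - 2 * \<zeta> / (\<zeta> - z)^2
           = 2 * \<zeta> * (y - z) / ((\<zeta> - y) * (\<zeta> - z)^2)" using kid yz by blast
      qed
      finally show ?thesis .
    qed
    have "norm (integral\<^sup>L \<mu> (\<lambda>\<zeta>. 2 * \<zeta> * (y - z) / ((\<zeta> - y) * (\<zeta> - z)^2)))
          \<le> (4 / d^3 * cmod (y - z)) * measure \<mu> (space \<mu>)"
    proof (rule int_bound(2)[OF kc])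
      fix \<zeta> :: complex assume "\<zeta> \<in> sphere 0 1"
      then have 1: "cmod \<zeta> = 1" by simp
      have a: "cmod (\<zeta> - z) \<ge> d" using dist_sph[OF 1, of z] by (simp add: d_def)
      then have a2: "(cmod (\<zeta> - z))^2 \<ge> d^2" using d by (simp add: power_mono)
      have b: "cmod (\<zeta> - y) \<ge> d/2" using dist_sph[OF 1, of y] dyz norm_triangle_ineq2[of y z]
        by (simp add: d_def)
      have h1: "(d/2) * d^2 \<le> cmod (\<zeta> - y) * (cmod (\<zeta> - z))^2"
        using a2 b d by (intro mult_mono) auto
      have h2: "cmod (2 * \<zeta> * (y - z) / ((\<zeta> - y) * (\<zeta> - z)^2)) = 2 * cmod (y - z) / (cmod (\<zeta> - y) * (cmod (\<zeta> - z))^2)"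
        using 1 by (simp add: norm_divide norm_mult norm_power)
      have "cmod (2 * \<zeta> * (y - z) / ((\<zeta> - y) * (\<zeta> - z)^2)) \<le> 2 * cmod (y - z) / ((d/2) * d^2)"
      proof -
        have p: "0 < (d/2) * d^2" using d by simp
        show ?thesis unfolding h2
          by (rule divide_left_mono[OF h1]) (use p h1 in auto)
      qed
      also have "\<dots> = 4 / d^3 * cmod (y - z)" using d by (simp add: field_simps power3_eq_cube power2_eq_square)
      finally show "cmod (2 * \<zeta> * (y - z) / ((\<zeta> - y) * (\<zeta> - z)^2)) \<le> 4 / d^3 * cmod (y - z)" .
    qed
    then show "norm ((G y - G z) / (y - z) - D) \<le> C * cmod (y - z)"
      unfolding eq C_def by (simp add: algebra_simps)
  qed
  have "((\<lambda>y. (G y - G z) / (y - z) - D) \<longlongrightarrow> 0) (at z)"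
  proof (rule Lim_null_comparison[OF ev])
    have "((\<lambda>y. C * cmod (y - z)) \<longlongrightarrow> C * cmod (z - z)) (at z)"
      by (intro tendsto_intros)
    then show "((\<lambda>y. C * cmod (y - z)) \<longlongrightarrow> 0) (at z)" by simp
  qed
  then have "((\<lambda>y. (G y - G z) / (y - z)) \<longlongrightarrow> D) (at z)" by (rule LIM_zero_cancel)
  then show ?thesis unfolding D_def has_field_derivative_iff .
qed


definition F :: "complex \<Rightarrow> complex" where "F z = (1 + \<phi> z) / (1 - \<phi> z)"

lemma phi_ne1: "(z::complex) \<in> ball 0 1 \<Longrightarrow> 1 - \<phi> z \<noteq> 0"
  using phi_in[of z] by auto

lemma F_eq_G: "\<exists>c. \<forall>z\<in>ball 0 1. F z = G z + c"
proof -
  have Fh: "F holomorphic_on ball 0 1" unfolding F_def[abs_def]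
    by (intro holomorphic_intros hol) (use phi_ne1 in auto)
  have "\<exists>c. \<forall>z\<in>ball 0 1. F z - G z = c"
  proof (rule has_field_derivative_zero_constant)
    show "convex (ball (0::complex) 1)" by simp
    fix z :: complex assume z: "z \<in> ball 0 1"
    obtain f' where f': "(F has_field_derivative f') (at z)"
    proof -
      have "\<forall>x\<in>ball 0 1. \<exists>f'. (F has_field_derivative f') (at x)"
        using Fh holomorphic_on_open[of "ball 0 1" F] by auto
      then show ?thesis using that z by blast
    qed
    have d: "((\<lambda>w. F w - G w) has_field_derivative (f' - integral\<^sup>L \<mu> (\<lambda>\<zeta>. 2 * \<zeta> / (\<zeta> - z)^2))) (at z)"
      by (intro derivative_intros f' G_deriv z)
    have "f' - integral\<^sup>L \<mu> (\<lambda>\<zeta>. 2 * \<zeta> / (\<zeta> - z)^2) = 0"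
    proof (rule re_zero_deriv[OF d _ z])
      show "open (ball (0::complex) 1)" by simp
      fix w :: complex assume w: "w \<in> ball 0 1"
      show "Re (F w - G w) = 0" using ReG[OF w] re_cayley[of "\<phi> w"] by (simp add: F_def)
    qed
    then show "((\<lambda>w. F w - G w) has_field_derivative 0) (at z within ball 0 1)"
      using d by (simp add: has_field_derivative_at_within)
  qed
  then show ?thesis by (metis add.commute diff_eq_eq)
qed


lemma one_sets: "{1} \<in> sets \<mu>"
  unfolding sets_mu by (subst sets_restrict_space_iff) auto

lemma G_stolz:
  assumes zb: "\<And>n. z n \<in> ball 0 1" and zl: "z \<longlonglongrightarrow> 1"
    and st: "\<And>n. cmod (1 - z n) \<le> M * (1 - cmod (z n))"
  shows "(\<lambda>n. (1 - z n) * G (z n)) \<longlonglongrightarrow> 2 * complex_of_real (measure \<mu> {1})"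
proof -
  interpret finite_measure \<mu> by (rule finite_mu)
  define s where "s n \<zeta> = (1 - z n) * ((\<zeta> + z n) / (\<zeta> - z n))" for n \<zeta>
  define f where "f \<zeta> = complex_of_real (2 * indicator {1} \<zeta>)" for \<zeta> :: complex
  have eq: "(1 - z n) * G (z n) = integral\<^sup>L \<mu> (s n)" for n
    unfolding s_def G_def by (rule integral_mult_right_zero[symmetric])
  have fm: "f \<in> borel_measurable \<mu>" unfolding f_def
    using borel_measurable_indicator[OF one_sets] by measurable
  have sm: "s n \<in> borel_measurable \<mu>" for n
  proof -
    have "continuous_on (sphere 0 1) (\<lambda>\<zeta>. (\<zeta> + z n) / (\<zeta> - z n))" by (rule kern_cont[OF zb])
    then have "continuous_on (sphere 0 1) (s n)" unfolding s_def by (rule continuous_on_mult[OF continuous_on_const])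
    then show ?thesis by (rule meas_mu)
  qed
  have lim: "AE \<zeta> in \<mu>. (\<lambda>n. s n \<zeta>) \<longlonglongrightarrow> f \<zeta>"
  proof (rule AE_I2)
    fix \<zeta> assume "\<zeta> \<in> space \<mu>"
    then have 1: "cmod \<zeta> = 1" by (simp add: space_mu)
    show "(\<lambda>n. s n \<zeta>) \<longlonglongrightarrow> f \<zeta>"
    proof (cases "\<zeta> = 1")
      case True
      have "s n \<zeta> = 1 + z n" for n
      proof -
        have "z n \<noteq> 1" using zb[of n] by auto
        then have "1 - z n \<noteq> 0" by simp
        then show ?thesis unfolding s_def True by simp
      qed
      moreover have "(\<lambda>n. 1 + z n) \<longlonglongrightarrow> 1 + 1" by (intro tendsto_intros zl)
      ultimately show ?thesis using True by (simp add: f_def)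
    next
      case False
      have "(\<lambda>n. s n \<zeta>) \<longlonglongrightarrow> (1 - 1) * ((\<zeta> + 1) / (\<zeta> - 1))"
        unfolding s_def using False by (intro tendsto_intros zl) auto
      then show ?thesis using False by (simp add: f_def)
    qed
  qed
  have bound: "AE \<zeta> in \<mu>. norm (s n \<zeta>) \<le> 2 * M" for n
  proof (rule AE_I2)
    fix \<zeta> assume "\<zeta> \<in> space \<mu>"
    then have 1: "cmod \<zeta> = 1" by (simp add: space_mu)
    have d: "1 - cmod (z n) > 0" using zb[of n] by simp
    have a: "cmod (\<zeta> - z n) \<ge> 1 - cmod (z n)" by (rule dist_sph[OF 1])
    have b: "cmod (\<zeta> + z n) \<le> 2" using norm_triangle_ineq[of \<zeta> "z n"] 1 d by simp
    have "norm (s n \<zeta>) = cmod (1 - z n) * cmod (\<zeta> + z n) / cmod (\<zeta> - z n)"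
      unfolding s_def by (simp add: norm_mult norm_divide)
    also have "\<dots> \<le> cmod (1 - z n) * 2 / (1 - cmod (z n))"
      by (intro frac_le mult_left_mono a b) (use d in auto)
    also have "\<dots> \<le> M * (1 - cmod (z n)) * 2 / (1 - cmod (z n))"
      by (intro divide_right_mono mult_right_mono st) (use d in auto)
    also have "\<dots> = 2 * M" using d by simp
    finally show "norm (s n \<zeta>) \<le> 2 * M" .
  qed
  have "(\<lambda>n. integral\<^sup>L \<mu> (s n)) \<longlonglongrightarrow> integral\<^sup>L \<mu> f"
    by (rule integral_dominated_convergence[OF fm sm _ lim bound]) simp
  moreover have "integral\<^sup>L \<mu> f = 2 * complex_of_real (measure \<mu> {1})"
  proof -
    have "{1} \<inter> space \<mu> = {1}" by (auto simp: space_mu)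
    then show ?thesis unfolding f_def by simp
  qed
  ultimately show ?thesis unfolding eq by simp
qed


lemma F_stolz:
  assumes zb: "\<And>n. z n \<in> ball 0 1" and zl: "z \<longlonglongrightarrow> 1"
    and st: "\<And>n. cmod (1 - z n) \<le> M * (1 - cmod (z n))"
  shows "(\<lambda>n. (1 - z n) * F (z n)) \<longlonglongrightarrow> 2 * complex_of_real (measure \<mu> {1})"
proof -
  obtain c where c: "\<And>z. z \<in> ball 0 1 \<Longrightarrow> F z = G z + c" using F_eq_G by blast
  have e: "(1 - z n) * F (z n) = (1 - z n) * G (z n) + (1 - z n) * c" for n
    using c[OF zb[of n]] by (simp add: algebra_simps)
  have "(\<lambda>n. (1 - z n) * G (z n) + (1 - z n) * c) \<longlonglongrightarrow> 2 * complex_of_real (measure \<mu> {1}) + (1 - 1) * c"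
    by (intro tendsto_intros G_stolz[OF zb zl st] zl)
  then show ?thesis unfolding e by simp
qed

lemma H_lim:
  fixes \<delta> \<kappa> a s :: real
  assumes d: "\<delta> > 0"
  shows "((\<lambda>r. (1 - complex_of_real (1 - \<delta> * r) * cis (r * s + \<kappa> * r * a)) *
              F (complex_of_real (1 - \<delta> * r) * cis (r * s + \<kappa> * r * a)))
          \<longlongrightarrow> 2 * complex_of_real (measure \<mu> {1})) (at_right 0)"
proof (rule tendsto_at_right_sequentially[of 0 "1/\<delta>"])
  show "(0::real) < 1 / \<delta>" using d by simp
  fix S :: "nat \<Rightarrow> real" assume S0: "\<And>n. 0 < S n" and S1: "\<And>n. S n < 1 / \<delta>" and Sl: "S \<longlonglongrightarrow> 0"
  define z where "z n = complex_of_real (1 - \<delta> * S n) * cis (S n * s + \<kappa> * S n * a)" for n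
  define M where "M = (\<bar>s + \<kappa> * a\<bar> + \<delta>) / \<delta>"
  have ds: "0 < \<delta> * S n" "\<delta> * S n < 1" for n
    using S0[of n] S1[of n] d by (auto simp: field_simps)
  have nz: "cmod (z n) = 1 - \<delta> * S n" for n
  proof -
    have "cmod (z n) = \<bar>1 - \<delta> * S n\<bar>" unfolding z_def by (simp only: norm_mult norm_of_real norm_cis mult_1_right)
    then show ?thesis using ds[of n] by simp
  qed
  have zb: "z n \<in> ball 0 1" for n using nz[of n] ds[of n] by simp
  have "z \<longlonglongrightarrow> complex_of_real (1 - \<delta> * 0) * cis (0 * s + \<kappa> * 0 * a)"
    unfolding z_def by (intro tendsto_intros Sl)
  then have zl: "z \<longlonglongrightarrow> 1" by simp
  have st: "cmod (1 - z n) \<le> M * (1 - cmod (z n))" for n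
  proof -
    define \<theta> where "\<theta> = S n * s + \<kappa> * S n * a"
    have "1 - z n = (1 - cis \<theta>) + complex_of_real (\<delta> * S n) * cis \<theta>"
      unfolding z_def \<theta>_def by (simp add: algebra_simps)
    then have "cmod (1 - z n) \<le> cmod (1 - cis \<theta>) + cmod (complex_of_real (\<delta> * S n) * cis \<theta>)"
      by (metis norm_triangle_ineq)
    also have "\<dots> \<le> \<bar>\<theta>\<bar> + \<delta> * S n" using cis_bound[of \<theta>] ds[of n] by (simp add: norm_mult)
    also have "\<bar>\<theta>\<bar> = S n * \<bar>s + \<kappa> * a\<bar>"
    proof -
      have "\<theta> = S n * (s + \<kappa> * a)" unfolding \<theta>_def by (simp add: algebra_simps)
      then show ?thesis using S0[of n] by (simp add: abs_mult)
    qed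
    also have "S n * \<bar>s + \<kappa> * a\<bar> + \<delta> * S n = M * (1 - cmod (z n))"
      unfolding nz M_def using d by (simp add: field_simps)
    finally show ?thesis .
  qed
  show "(\<lambda>n. (1 - complex_of_real (1 - \<delta> * S n) * cis (S n * s + \<kappa> * S n * a)) *
              F (complex_of_real (1 - \<delta> * S n) * cis (S n * s + \<kappa> * S n * a)))
        \<longlonglongrightarrow> 2 * complex_of_real (measure \<mu> {1})"
    using F_stolz[OF zb zl st] unfolding z_def .
qed


lemma ptw:
  fixes \<delta> \<kappa> a s :: real
  assumes d: "\<delta> > 0"
  shows "((\<lambda>r. r * (cmod (comp_op \<phi> (nrk (complex_of_real (1 - r) * cis (\<kappa> * r)))
                   (complex_of_real (1 - \<delta> * r) * cis (r * s + \<kappa> * r * a))))^2)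
     \<longlongrightarrow> 2 * (measure \<mu> {1})^2 / ((measure \<mu> {1} + \<delta>)^2 + (\<kappa> * (measure \<mu> {1} - a) - s)^2)) (at_right 0)"
proof -
  define b where "b = measure \<mu> {1}"
  have b0: "b \<ge> 0" unfolding b_def by simp
  define Z where "Z r = complex_of_real (1 - \<delta> * r) * cis (r * s + \<kappa> * r * a)" for r
  define W where "W r = cnj (complex_of_real (1 - r) * cis (\<kappa> * r))" for r
  define Hh where "Hh r = (1 - Z r) * F (Z r)" for r
  define Den where "Den r = (1 - W r) / complex_of_real r * (Hh r + 1 - Z r) + 2 * W r * ((1 - Z r) / complex_of_real r)" for r
  define L where "L = (1 + \<i> * complex_of_real \<kappa>) * (2 * complex_of_real b) + 2 * (complex_of_real \<delta> - \<i> * complex_of_real (\<kappa> * a + s))"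
  define Wf where "Wf \<rho> = (1 - \<rho>) * exp (- (\<i> * complex_of_real \<kappa> * \<rho>))" for \<rho>
  define Zf where "Zf \<rho> = (1 - complex_of_real \<delta> * \<rho>) * exp (\<i> * complex_of_real (s + \<kappa> * a) * \<rho>)" for \<rho>
  have WWf: "W r = Wf (complex_of_real r)" for r
  proof -
    have c: "cnj (cis x) = cis (- x)" for x by (simp add: complex_eq_iff)
    have "W r = complex_of_real (1 - r) * cis (- (\<kappa> * r))" unfolding W_def by (simp add: c)
    then show ?thesis unfolding Wf_def by (simp add: cis_conv_exp algebra_simps)
  qed
  have ZZf: "Z r = Zf (complex_of_real r)" for r
  proof -
    have "r * s + \<kappa> * r * a = (s + \<kappa> * a) * r" by (simp add: algebra_simps)
    then show ?thesis unfolding Z_def Zf_def by (simp add: cis_conv_exp algebra_simps)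
  qed
  have Wd: "(Wf has_field_derivative (-1 - \<i> * complex_of_real \<kappa>)) (at 0)"
    unfolding Wf_def by (auto intro!: derivative_eq_intros)
  have Zd: "(Zf has_field_derivative (- complex_of_real \<delta> + \<i> * complex_of_real (s + \<kappa> * a))) (at 0)"
    unfolding Zf_def by (auto intro!: derivative_eq_intros)
  have hW: "((\<lambda>r. (1 - W r) / complex_of_real r) \<longlongrightarrow> 1 + \<i> * complex_of_real \<kappa>) (at_right 0)"
  proof -
    have "((\<lambda>r. - ((Wf (complex_of_real r) - Wf 0) / complex_of_real r)) \<longlongrightarrow> - (-1 - \<i> * complex_of_real \<kappa>)) (at_right 0)"
      by (intro tendsto_minus dq_right Wd)
    moreover have "Wf 0 = 1" unfolding Wf_def by simp
    ultimately show ?thesis unfolding WWf by (simp add: minus_divide_left add.commute)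
  qed
  have hZ: "((\<lambda>r. (1 - Z r) / complex_of_real r) \<longlongrightarrow> complex_of_real \<delta> - \<i> * complex_of_real (\<kappa> * a + s)) (at_right 0)"
  proof -
    have "((\<lambda>r. - ((Zf (complex_of_real r) - Zf 0) / complex_of_real r)) \<longlongrightarrow> - (- complex_of_real \<delta> + \<i> * complex_of_real (s + \<kappa> * a))) (at_right 0)"
      by (intro tendsto_minus dq_right Zd)
    moreover have "Zf 0 = 1" unfolding Zf_def by simp
    ultimately show ?thesis unfolding ZZf by (simp add: minus_divide_left algebra_simps)
  qed
  have hH: "(Hh \<longlongrightarrow> 2 * complex_of_real b) (at_right 0)"
    unfolding Hh_def Z_def b_def by (rule H_lim[OF d])
  have hZ1: "(Z \<longlongrightarrow> 1) (at_right 0)"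
  proof -
    have "(Z \<longlongrightarrow> complex_of_real (1 - \<delta> * 0) * cis (0 * s + \<kappa> * 0 * a)) (at_right 0)"
      unfolding Z_def[abs_def] by (intro tendsto_intros)
    then show ?thesis by simp
  qed
  have hW1: "(W \<longlongrightarrow> 1) (at_right 0)"
  proof -
    have "(W \<longlongrightarrow> cnj (complex_of_real (1 - 0) * cis (\<kappa> * 0))) (at_right 0)"
      unfolding W_def[abs_def] by (intro tendsto_intros)
    then show ?thesis by simp
  qed
  have Lnz: "L \<noteq> 0"
  proof
    assume "L = 0"
    then have "Re L = 0" by simp
    moreover have "Re L = 2 * b + 2 * \<delta>" unfolding L_def by simp
    ultimately show False using b0 d by simp
  qed
  have hDen: "(Den \<longlongrightarrow> L) (at_right 0)"
  proof -
    have "(Den \<longlongrightarrow> (1 + \<i> * complex_of_real \<kappa>) * (2 * complex_of_real b + 1 - 1) + 2 * 1 * (complex_of_real \<delta> - \<i> * complex_of_real (\<kappa> * a + s))) (at_right 0)"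
      unfolding Den_def[abs_def] by (intro tendsto_intros hW hH hZ1 hW1 hZ)
    then show ?thesis unfolding L_def by simp
  qed
  have hQ: "((\<lambda>r. (Hh r + 1 - Z r) / Den r) \<longlongrightarrow> (2 * complex_of_real b + 1 - 1) / L) (at_right 0)"
    by (intro tendsto_intros hH hZ1 hDen Lnz)
  have hR: "((\<lambda>r. (2 - r) * (cmod ((Hh r + 1 - Z r) / Den r))^2) \<longlongrightarrow> (2 - 0) * (cmod ((2 * complex_of_real b + 1 - 1) / L))^2) (at_right 0)"
    by (intro tendsto_intros hQ)
  have val: "(2 - 0) * (cmod ((2 * complex_of_real b + 1 - 1) / L))^2 = 2 * b^2 / ((b + \<delta>)^2 + (\<kappa> * (b - a) - s)^2)"
  proof -
    define X where "X = (b + \<delta>)^2 + (\<kappa> * (b - a) - s)^2"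
    have X: "X > 0" unfolding X_def
      using b0 d by (smt (verit) zero_le_power2 zero_less_power2)
    have cL: "(cmod L)^2 = 4 * X"
      unfolding L_def cmod_power2 X_def by (simp add: power2_eq_square algebra_simps)
    have "(cmod ((2 * complex_of_real b + 1 - 1) / L))^2 = 4 * b^2 / (cmod L)^2"
      by (simp add: norm_divide power_divide norm_mult power_mult_distrib)
    also have "\<dots> = b^2 / X" unfolding cL using X by simp
    finally have "(cmod ((2 * complex_of_real b + 1 - 1) / L))^2 = b^2 / X" .
    then show ?thesis unfolding X_def[symmetric] by simp
  qed
  have ev: "\<forall>\<^sub>F r in at_right 0. (2 - r) * (cmod ((Hh r + 1 - Z r) / Den r))^2 =
       r * (cmod (comp_op \<phi> (nrk (complex_of_real (1 - r) * cis (\<kappa> * r)))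
                   (complex_of_real (1 - \<delta> * r) * cis (r * s + \<kappa> * r * a))))^2"
    unfolding eventually_at_right_field
  proof (intro exI[of _ "min 1 (1/\<delta>)"] conjI allI impI)
    show "(0::real) < min 1 (1/\<delta>)" using d by simp
    fix r :: real assume r0: "0 < r" and r1: "r < min 1 (1/\<delta>)"
    have r1': "r < 1" and dr: "\<delta> * r < 1" using r1 d by (auto simp: field_simps)
    define w where "w = complex_of_real (1 - r) * cis (\<kappa> * r)"
    define P where "P = \<phi> (Z r)"
    have nw: "cmod w = 1 - r" unfolding w_def using r1'
      by (simp only: norm_mult norm_of_real norm_cis mult_1_right)
    have nZ: "cmod (Z r) = 1 - \<delta> * r" unfolding Z_def using dr r0 d
      by (simp only: norm_mult norm_of_real norm_cis mult_1_right)
    have Zb: "Z r \<in> ball 0 1" using nZ r0 d by simp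
    have Z1: "Z r \<noteq> 1" using nZ r0 d by auto
    have P1: "P \<noteq> 1" using phi_ne1[OF Zb] unfolding P_def by simp
    have nP: "cmod P < 1" unfolding P_def by (rule phi_in[OF Zb])
    have nW: "cmod (W r) = 1 - r" unfolding W_def using nw unfolding w_def by (simp only: complex_mod_cnj)
    have nWP: "cmod (W r * P) < 1"
    proof -
      have "cmod (W r * P) = (1 - r) * cmod P" by (simp add: norm_mult nW)
      also have "\<dots> < 1" using nP r0 r1' mult_le_one[of "1 - r" "cmod P"] by (smt (verit) norm_ge_zero mult_left_le_one_le)
      finally show ?thesis .
    qed
    have dnz: "1 - W r * P \<noteq> 0" using nWP by auto
    have "comp_op \<phi> (nrk w) (Z r) = complex_of_real (sqrt (1 - (cmod w)^2)) / (1 - W r * P)"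
      unfolding comp_op_def nrk_def P_def W_def w_def by simp
    then have "(cmod (comp_op \<phi> (nrk w) (Z r)))^2 = (1 - (cmod w)^2) / (cmod (1 - W r * P))^2"
      using nw r0 r1' by (simp add: norm_divide power_divide abs_square_le_1)
    also have "1 - (cmod w)^2 = r * (2 - r)" unfolding nw by (simp add: power2_eq_square algebra_simps)
    finally have e1: "r * (cmod (comp_op \<phi> (nrk w) (Z r)))^2 = (2 - r) * (cmod (complex_of_real r / (1 - W r * P)))^2"
      using r0 by (simp add: norm_divide power_divide power2_eq_square)
    have e2: "complex_of_real r / (1 - W r * P) = (Hh r + 1 - Z r) / Den r"
      unfolding Hh_def Den_def F_def P_def[symmetric] using alg[OF P1 Z1 _ dnz, of r] r0 by simp
    show "(2 - r) * (cmod ((Hh r + 1 - Z r) / Den r))^2 =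
       r * (cmod (comp_op \<phi> (nrk (complex_of_real (1 - r) * cis (\<kappa> * r)))
                   (complex_of_real (1 - \<delta> * r) * cis (r * s + \<kappa> * r * a))))^2"
      using e1 e2 unfolding w_def Z_def by simp
  qed
  have "((\<lambda>r. r * (cmod (comp_op \<phi> (nrk (complex_of_real (1 - r) * cis (\<kappa> * r)))
                   (complex_of_real (1 - \<delta> * r) * cis (r * s + \<kappa> * r * a))))^2)
     \<longlongrightarrow> 2 * b^2 / ((b + \<delta>)^2 + (\<kappa> * (b - a) - s)^2)) (at_right 0)"
    using tendsto_cong[OF ev] hR unfolding val by blast
  then show ?thesis unfolding b_def .
qed


lemma Qcb:
  fixes \<delta> \<kappa> r :: real
  assumes r0: "0 < r" and r1: "r < 1" and dr: "\<delta> * r < 1" and d: "\<delta> > 0"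
  shows "continuous_on UNIV (\<lambda>t. r * (cmod (comp_op \<phi> (nrk (complex_of_real (1 - r) * cis (\<kappa> * r)))
                   (complex_of_real (1 - \<delta> * r) * cis t)))^2)"
    and "\<And>t. \<bar>r * (cmod (comp_op \<phi> (nrk (complex_of_real (1 - r) * cis (\<kappa> * r)))
                   (complex_of_real (1 - \<delta> * r) * cis t)))^2\<bar> \<le> 2"
proof -
  define w where "w = complex_of_real (1 - r) * cis (\<kappa> * r)"
  define Z where "Z t = complex_of_real (1 - \<delta> * r) * cis t" for t
  have nw: "cmod w = 1 - r" unfolding w_def using r1
    by (simp only: norm_mult norm_of_real norm_cis mult_1_right)
  have nZ: "cmod (Z t) = 1 - \<delta> * r" for t unfolding Z_def using dr r0 d
    by (simp only: norm_mult norm_of_real norm_cis mult_1_right)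
  have Zb: "Z t \<in> ball 0 1" for t using nZ[of t] r0 d by simp
  have nP: "cmod (\<phi> (Z t)) < 1" for t by (rule phi_in[OF Zb])
  have nWP: "cmod (cnj w * \<phi> (Z t)) \<le> 1 - r" for t
  proof -
    have "cmod (cnj w * \<phi> (Z t)) = (1 - r) * cmod (\<phi> (Z t))" by (simp add: norm_mult nw)
    also have "\<dots> \<le> 1 - r" using nP[of t] r1 by (simp add: mult_left_le)
    finally show ?thesis .
  qed
  have dlow: "cmod (1 - cnj w * \<phi> (Z t)) \<ge> r" for t
    using norm_triangle_ineq2[of 1 "cnj w * \<phi> (Z t)"] nWP[of t] by simp
  have eq: "comp_op \<phi> (nrk w) (Z t) = complex_of_real (sqrt (1 - (cmod w)^2)) / (1 - cnj w * \<phi> (Z t))" for t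
    unfolding comp_op_def nrk_def by simp
  have phic: "continuous_on (ball 0 1) \<phi>" by (rule holomorphic_on_imp_continuous_on[OF hol])
  have c1: "continuous_on UNIV (\<lambda>t. \<phi> (Z t))"
  proof (rule continuous_on_compose2[OF phic])
    show "continuous_on UNIV Z" unfolding Z_def[abs_def] by (intro continuous_intros)
    show "Z ` UNIV \<subseteq> ball 0 1" using Zb by blast
  qed
  have cc: "continuous_on UNIV (\<lambda>t. complex_of_real (sqrt (1 - (cmod w)^2)) / (1 - cnj w * \<phi> (Z t)))"
    apply (rule continuous_on_divide)
      apply (rule continuous_on_const)
     apply (intro continuous_intros c1)
    using dlow r0 by (metis norm_zero not_le)
  then show "continuous_on UNIV (\<lambda>t. r * (cmod (comp_op \<phi> (nrk (complex_of_real (1 - r) * cis (\<kappa> * r)))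
                   (complex_of_real (1 - \<delta> * r) * cis t)))^2)"
    unfolding w_def[symmetric] Z_def[symmetric] eq
    using continuous_on_mult[OF continuous_on_const[of UNIV r] continuous_on_power[OF continuous_on_norm[OF cc], of 2]]
    by simp
  fix t
  have "(cmod (comp_op \<phi> (nrk w) (Z t)))^2 = (1 - (cmod w)^2) / (cmod (1 - cnj w * \<phi> (Z t)))^2"
    unfolding eq using nw r0 r1 by (simp add: norm_divide power_divide abs_square_le_1)
  also have "1 - (cmod w)^2 = r * (2 - r)" unfolding nw by (simp add: power2_eq_square algebra_simps)
  finally have e: "r * (cmod (comp_op \<phi> (nrk w) (Z t)))^2 = r * (r * (2 - r)) / (cmod (1 - cnj w * \<phi> (Z t)))^2"
    by simp
  have "r * (r * (2 - r)) / (cmod (1 - cnj w * \<phi> (Z t)))^2 \<le> r * (r * (2 - r)) / r^2"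
    apply (rule divide_left_mono)
    using dlow[of t] r0 r1 by (auto intro!: power_mono mult_pos_pos)
  also have "\<dots> = 2 - r" using r0 by (simp add: power2_eq_square)
  finally have "r * (cmod (comp_op \<phi> (nrk w) (Z t)))^2 \<le> 2" unfolding e using r0 by simp
  moreover have "r * (cmod (comp_op \<phi> (nrk w) (Z t)))^2 \<ge> 0" using r0 by simp
  ultimately show "\<bar>r * (cmod (comp_op \<phi> (nrk (complex_of_real (1 - r) * cis (\<kappa> * r)))
                   (complex_of_real (1 - \<delta> * r) * cis t)))^2\<bar> \<le> 2"
    unfolding w_def Z_def by simp
qed


lemma I_lim:
  fixes \<delta> \<kappa> l a :: real
  assumes d: "\<delta> > 0" and l: "l > 0"
  shows "((\<lambda>r. I_int \<phi> a \<delta> \<kappa> l r) \<longlongrightarrow> 1 / (2 * pi) * integral {-l..l}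
     (\<lambda>s. 2 * (measure \<mu> {1})^2 / ((measure \<mu> {1} + \<delta>)^2 + (\<kappa> * (measure \<mu> {1} - a) - s)^2))) (at_right 0)"
proof -
  define q where "q r t = (cmod (comp_op \<phi> (nrk (complex_of_real (1 - r) * cis (\<kappa> * r)))
                   (complex_of_real (1 - \<delta> * r) * cis t)))^2" for r t
  define h where "h r s = r * q r (r * s + \<kappa> * r * a)" for r s
  define g where "g s = 2 * (measure \<mu> {1})^2 / ((measure \<mu> {1} + \<delta>)^2 + (\<kappa> * (measure \<mu> {1} - a) - s)^2)" for s
  define r0 where "r0 = min 1 (1 / \<delta>)"
  have r0: "r0 > 0" unfolding r0_def using d by simp
  have rr: "r < 1" "\<delta> * r < 1" if "r < r0" for r
    using that d unfolding r0_def by (auto simp: field_simps)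
  have hc: "continuous_on UNIV (h r)" "\<And>s. \<bar>h r s\<bar> \<le> 2" if "0 < r" "r < r0" for r
  proof -
    have c: "continuous_on UNIV (\<lambda>t. r * q r t)"
      unfolding q_def using Qcb(1)[OF that(1) rr[OF that(2)] d] .
    have "continuous_on UNIV (\<lambda>s. r * q r (r * s + \<kappa> * r * a))"
      by (rule continuous_on_compose2[OF c]) (auto intro!: continuous_intros)
    then show "continuous_on UNIV (h r)" unfolding h_def[abs_def] .
    fix s show "\<bar>h r s\<bar> \<le> 2" unfolding h_def q_def by (rule Qcb(2)[OF that(1) rr[OF that(2)] d])
  qed
  have Ieq: "I_int \<phi> a \<delta> \<kappa> l r = 1 / (2 * pi) * integral {-l..l} (h r)" if "0 < r" "r < r0" for r
  proof -
    have c: "continuous_on UNIV (\<lambda>t. r * q r t)"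
      unfolding q_def using Qcb(1)[OF that(1) rr[OF that(2)] d] .
    have "continuous_on UNIV (\<lambda>t. (1 / r) * (r * q r t))"
      by (intro continuous_on_mult[OF continuous_on_const c])
    then have cq: "continuous_on UNIV (q r)" using that(1) by simp
    have "integral {\<kappa> * r * a - l * r .. \<kappa> * r * a + l * r} (q r) = r * integral {-l..l} (\<lambda>s. q r (r * s + \<kappa> * r * a))"
      by (rule change_var[OF continuous_on_subset[OF cq] that(1) l]) simp
    also have "\<dots> = integral {-l..l} (h r)"
    proof -
      have "(\<lambda>s. q r (r * s + \<kappa> * r * a)) integrable_on {-l..l}"
        by (rule integrable_continuous_real)
           (rule continuous_on_compose2[OF cq], auto intro!: continuous_intros)
      then show ?thesis unfolding h_def by (rule integral_mult)
    qed
    finally have fin: "integral {\<kappa> * r * a - l * r .. \<kappa> * r * a + l * r} (q r) = integral {-l..l} (h r)" .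
    have qe: "(\<lambda>t. (cmod (comp_op \<phi> (nrk (complex_of_real (1 - r) * cis (\<kappa> * r)))
                   (complex_of_real (1 - \<delta> * r) * cis t)))^2) = q r" unfolding q_def by (rule refl)
    show ?thesis unfolding I_int_def qe fin ..
  qed
  show ?thesis
  proof (rule tendsto_at_right_sequentially[OF r0])
    fix S :: "nat \<Rightarrow> real" assume S0: "\<And>n. 0 < S n" and S1: "\<And>n. S n < r0" and Sd: "decseq S" and Sl: "S \<longlonglongrightarrow> 0"
    have Sf: "filterlim S (at_right 0) sequentially"
      unfolding filterlim_at using Sl by (auto intro!: always_eventually simp: S0 less_imp_neq[OF S0, symmetric])
    have "(\<lambda>n. integral {-l..l} (h (S n))) \<longlonglongrightarrow> integral {-l..l} g"
    proof (rule dominated_convergence(2)[where h="\<lambda>_. 2"])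
      show "h (S n) integrable_on {-l..l}" for n
        by (rule integrable_continuous_real, rule continuous_on_subset[OF hc(1)[OF S0 S1]]) simp
      show "(\<lambda>_. 2::real) integrable_on {-l..l}" by (rule integrable_const_ivl)
      show "norm (h (S n) s) \<le> 2" if "s \<in> {-l..l}" for n s using hc(2)[OF S0 S1] by simp
      show "(\<lambda>n. h (S n) s) \<longlonglongrightarrow> g s" if "s \<in> {-l..l}" for s
      proof -
        have "((\<lambda>r. h r s) \<longlongrightarrow> g s) (at_right 0)"
          unfolding h_def q_def g_def by (rule ptw[OF d])
        from filterlim_compose[OF this Sf] show ?thesis by simp
      qed
    qed
    then have "(\<lambda>n. 1 / (2 * pi) * integral {-l..l} (h (S n))) \<longlonglongrightarrow> 1 / (2 * pi) * integral {-l..l} g"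
      by (intro tendsto_intros)
    moreover have "I_int \<phi> a \<delta> \<kappa> l (S n) = 1 / (2 * pi) * integral {-l..l} (h (S n))" for n
      by (rule Ieq[OF S0 S1])
    ultimately show "(\<lambda>n. I_int \<phi> a \<delta> \<kappa> l (S n)) \<longlonglongrightarrow> 1 / (2 * pi) * integral {-l..l}
     (\<lambda>s. 2 * (measure \<mu> {1})^2 / ((measure \<mu> {1} + \<delta>)^2 + (\<kappa> * (measure \<mu> {1} - a) - s)^2))"
      unfolding g_def by simp
  qed
qed

end

theorem lemma3p3:
  fixes \<phi> :: "complex \<Rightarrow> complex" and a :: real and \<mu> :: "complex measure"
  assumes hol: "\<phi> holomorphic_on ball 0 1"
    and maps: "\<phi> ` ball 0 1 \<subseteq> ball 0 1"
    and a_pos: "a > 0"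
    and tau: "is_AC_measure \<phi> 1 \<mu>"
  shows "(measure \<mu> {1} = a \<longrightarrow>
           (\<exists>c :: real \<Rightarrow> real \<Rightarrow> real.
              (\<forall>\<delta>>0. \<forall>\<kappa>>0. \<forall>l>0.
                 ((\<lambda>r. I_int \<phi> a \<delta> \<kappa> l r) \<longlongrightarrow> a * c \<delta> l / (1 + \<delta> / a)) (at_right 0)) \<and>
              (\<forall>\<delta>>0. \<forall>l>0. 0 < c \<delta> l \<and> c \<delta> l < 1) \<and>
              (\<forall>\<delta>>0. ((\<lambda>l. c \<delta> l) \<longlongrightarrow> 1) at_top)))
       \<and> (measure \<mu> {1} \<noteq> a \<longrightarrow>
           (\<exists>\<epsilon> :: real \<Rightarrow> real \<Rightarrow> real \<Rightarrow> real.
              (\<forall>\<delta>>0. \<forall>\<kappa>>0. \<forall>l>0.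
                 ((\<lambda>r. I_int \<phi> a \<delta> \<kappa> l r) \<longlongrightarrow> \<epsilon> \<delta> \<kappa> l) (at_right 0)) \<and>
              (\<forall>\<delta>>0. \<forall>l>0. ((\<lambda>\<kappa>. \<epsilon> \<delta> \<kappa> l) \<longlongrightarrow> 0) at_top)))"
proof -
  define b where "b = measure \<mu> {1}"
  have b0: "b \<ge> 0" unfolding b_def by simp
  define V where "V \<delta> \<kappa> l = 1 / (2 * pi) * (2 * b^2 / (b + \<delta>) *
      (arctan ((l - \<kappa> * (b - a)) / (b + \<delta>)) - arctan ((- l - \<kappa> * (b - a)) / (b + \<delta>))))" for \<delta> \<kappa> l
  have lim: "((\<lambda>r. I_int \<phi> a \<delta> \<kappa> l r) \<longlongrightarrow> V \<delta> \<kappa> l) (at_right 0)" if d: "\<delta> > 0" and l: "l > 0" for \<delta> \<kappa> l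
  proof -
    have A: "b + \<delta> > 0" using b0 d by simp
    have "integral {-l..l} (\<lambda>s. 2 * b^2 / ((b + \<delta>)^2 + (\<kappa> * (b - a) - s)^2)) =
        2 * b^2 / (b + \<delta>) * (arctan ((l - \<kappa> * (b - a)) / (b + \<delta>)) - arctan ((- l - \<kappa> * (b - a)) / (b + \<delta>)))"
      by (rule arctan_int[OF A l])
    then show ?thesis using I_lim[OF tau maps hol d l, of a \<kappa>] unfolding b_def[symmetric] V_def by simp
  qed
  show ?thesis
  proof (intro conjI impI)
    assume ba: "measure \<mu> {1} = a"
    then have ba': "b = a" unfolding b_def .
    show "\<exists>c :: real \<Rightarrow> real \<Rightarrow> real.
              (\<forall>\<delta>>0. \<forall>\<kappa>>0. \<forall>l>0.
                 ((\<lambda>r. I_int \<phi> a \<delta> \<kappa> l r) \<longlongrightarrow> a * c \<delta> l / (1 + \<delta> / a)) (at_right 0)) \<and>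
              (\<forall>\<delta>>0. \<forall>l>0. 0 < c \<delta> l \<and> c \<delta> l < 1) \<and>
              (\<forall>\<delta>>0. ((\<lambda>l. c \<delta> l) \<longlongrightarrow> 1) at_top)"
    proof (intro exI[of _ "\<lambda>\<delta> l. 2 / pi * arctan (l / (a + \<delta>))"] conjI allI impI)
      fix \<delta> \<kappa> l :: real assume d: "\<delta> > 0" and k: "\<kappa> > 0" and l: "l > 0"
      have "V \<delta> \<kappa> l = a * (2 / pi * arctan (l / (a + \<delta>))) / (1 + \<delta> / a)"
        unfolding V_def ba' using a_pos d by (simp add: arctan_minus field_simps power2_eq_square)
      then show "((\<lambda>r. I_int \<phi> a \<delta> \<kappa> l r) \<longlongrightarrow> a * (2 / pi * arctan (l / (a + \<delta>))) / (1 + \<delta> / a)) (at_right 0)"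
        using lim[OF d l, of \<kappa>] by simp
    next
      fix \<delta> l :: real assume d: "\<delta> > 0" and l: "l > 0"
      have p: "l / (a + \<delta>) > 0" using d l a_pos by simp
      have "arctan (l / (a + \<delta>)) > 0" using p by (simp add: zero_less_arctan_iff)
      then show "0 < 2 / pi * arctan (l / (a + \<delta>))" by simp
      have "arctan (l / (a + \<delta>)) < pi / 2" by (rule arctan_ubound)
      then show "2 / pi * arctan (l / (a + \<delta>)) < 1" by (simp add: field_simps)
    next
      fix \<delta> :: real assume d: "\<delta> > 0"
      show "((\<lambda>l. 2 / pi * arctan (l / (a + \<delta>))) \<longlongrightarrow> 1) at_top"
        by (rule c_lim) (use d a_pos in simp)
    qed
  next
    assume ba: "measure \<mu> {1} \<noteq> a"
    then have ba': "b - a \<noteq> 0" unfolding b_def by simp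
    show "\<exists>\<epsilon> :: real \<Rightarrow> real \<Rightarrow> real \<Rightarrow> real.
              (\<forall>\<delta>>0. \<forall>\<kappa>>0. \<forall>l>0.
                 ((\<lambda>r. I_int \<phi> a \<delta> \<kappa> l r) \<longlongrightarrow> \<epsilon> \<delta> \<kappa> l) (at_right 0)) \<and>
              (\<forall>\<delta>>0. \<forall>l>0. ((\<lambda>\<kappa>. \<epsilon> \<delta> \<kappa> l) \<longlongrightarrow> 0) at_top)"
    proof (intro exI[of _ V] conjI allI impI)
      fix \<delta> \<kappa> l :: real assume d: "\<delta> > 0" and k: "\<kappa> > 0" and l: "l > 0"
      show "((\<lambda>r. I_int \<phi> a \<delta> \<kappa> l r) \<longlongrightarrow> V \<delta> \<kappa> l) (at_right 0)" by (rule lim[OF d l])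
    next
      fix \<delta> l :: real assume d: "\<delta> > 0" and l: "l > 0"
      have A: "b + \<delta> > 0" using b0 d by simp
      have "((\<lambda>\<kappa>. 1 / (2 * pi) * (2 * b^2 / (b + \<delta>) *
        (arctan ((l - \<kappa> * (b - a)) / (b + \<delta>)) - arctan ((- l - \<kappa> * (b - a)) / (b + \<delta>))))) \<longlongrightarrow>
         1 / (2 * pi) * (2 * b^2 / (b + \<delta>) * 0)) at_top"
        by (intro tendsto_intros arct_lim[OF A ba'])
      then show "((\<lambda>\<kappa>. V \<delta> \<kappa> l) \<longlongrightarrow> 0) at_top" unfolding V_def by simp
    qed
  qed
qed

end
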